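(* Let $C\subset X$ be a strictly convex cone and $T:X\to Y$ a linear mapping between finite-dimensional Euclidean spaces such that $\{0\}\neq\operatorname{Ker}T\cap C\subset\operatorname{bd}C$. Then $T(C)$ is a pointed cone in $Y$.
   Context: A cone $D$ is pointed if $D\cap(-D)=\{0\}$. A cone is regular if pointed, closed, convex, with nonempty interior; a regular cone is strictly convex if every face other than the cone itself and $\{0\}$ has dimension one (a face being a convex $\mathcal F\subset C$ such that $x,y\in C$, $\lambda x+(1-\lambda)y\in\mathcal F$ for some $0<\lambda<1$ implies $x,y\in\mathcal F$). *)

theory Defs
  imports "HOL-Analysis.Analysis"
begin

definition pointed_cone :: "'a::real_vector set \<Rightarrow> bool" where
  "pointed_cone D \<longleftrightarrow> D \<inter> uminus ` D = {0}"

definition regular_cone :: "'a::euclidean_space set \<Rightarrow> bool" where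
  "regular_cone C \<longleftrightarrow> cone C \<and> pointed_cone C \<and> closed C \<and> convex C \<and> interior C \<noteq> {}"

text \<open>Faces in the sense of the paper coincide with the library notion face_of
  (nonempty faces are considered; the empty set is not regarded as a face).\<close>
definition strictly_convex_cone :: "'a::euclidean_space set \<Rightarrow> bool" where
  "strictly_convex_cone C \<longleftrightarrow> regular_cone C \<and>
     (\<forall>F. F face_of C \<and> F \<noteq> {} \<and> F \<noteq> C \<and> F \<noteq> {0} \<longrightarrow> aff_dim F = 1)"

end

theory Submission
  imports Defs
begin

theorem lemma3:
  fixes C :: "'a::euclidean_space set" and T :: "'a \<Rightarrow> 'b::euclidean_space"
  assumes "strictly_convex_cone C"
    and "linear T"
    and "{x. T x = 0} \<inter> C \<noteq> {0}"
    and "{x. T x = 0} \<inter> C \<subseteq> frontier C"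
  shows "cone (T ` C) \<and> pointed_cone (T ` C)"
proof -
  have reg: "regular_cone C" and sc: "\<And>F. F face_of C \<Longrightarrow> F \<noteq> {} \<Longrightarrow> F \<noteq> C \<Longrightarrow> F \<noteq> {0} \<Longrightarrow> aff_dim F = 1"
    using assms(1) unfolding strictly_convex_cone_def by auto
  have cC: "cone C" and pC: "C \<inter> uminus ` C = {0}" and clC: "closed C" and cvC: "convex C"
    and inC: "interior C \<noteq> {}"
    using reg unfolding regular_cone_def pointed_cone_def by auto
  have lin: "linear T" by fact
  have C0: "0 \<in> C" using cC inC cone_contains_0 interior_subset by blast
  have addC: "p + q \<in> C" if "p \<in> C" "q \<in> C" for p q
  proof -
    have "(1/2) *\<^sub>R p + (1/2) *\<^sub>R q \<in> C" using cvC that convexD by fastforce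
    hence "2 *\<^sub>R ((1/2) *\<^sub>R p + (1/2) *\<^sub>R q) \<in> C" using cC cone_def by fastforce
    thus ?thesis by (simp add: scaleR_add_right)
  qed
  have cone: "cone (T ` C)"
    unfolding cone_def
  proof (intro ballI allI impI)
    fix y c assume "y \<in> T ` C" "(0::real) \<le> c"
    then obtain x where "x \<in> C" "y = T x" by auto
    hence "c *\<^sub>R x \<in> C" using cC \<open>0 \<le> c\<close> cone_def by blast
    thus "c *\<^sub>R y \<in> T ` C" using \<open>y = T x\<close> linear_cmul[OF lin] by (metis image_eqI)
  qed
  have key: "T a = 0" if aC: "a \<in> C" and bC: "b \<in> C" and ab: "T (a + b) = 0" for a b
  proof (cases "a + b = 0")
    case True
    hence "a = - b" by (simp add: eq_neg_iff_add_eq_0)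
    hence "a \<in> C \<inter> uminus ` C" using aC bC by auto
    thus ?thesis using pC linear_0[OF lin] by auto
  next
    case False
    define x where "x = a + b"
    have xC: "x \<in> C" using addC aC bC x_def by simp
    have "x \<in> frontier C" using assms(4) xC ab x_def by auto
    hence xni: "x \<notin> interior C" by (simp add: frontier_def)
    have ri: "rel_interior C = interior C" using inC rel_interior_nonempty_interior by blast
    obtain w where w: "\<And>y. y \<in> closure C \<Longrightarrow> w \<bullet> x \<le> w \<bullet> y"
        "\<And>y. y \<in> rel_interior C \<Longrightarrow> w \<bullet> x < w \<bullet> y"
    proof -
      have "x \<in> closure C" using xC closure_subset by blast
      moreover have "x \<notin> rel_interior C" using xni ri by simp
      ultimately show ?thesis using supporting_hyperplane_relative_frontier[OF cvC, of x] that by blast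
    qed
    have wle: "\<And>y. y \<in> C \<Longrightarrow> w \<bullet> x \<le> w \<bullet> y" using w(1) closure_subset by blast
    have "w \<bullet> x \<le> 0" using wle[OF C0] by simp
    moreover have "2 *\<^sub>R x \<in> C" using cC xC cone_def by fastforce
    hence "w \<bullet> x \<le> w \<bullet> (2 *\<^sub>R x)" using wle by blast
    hence "w \<bullet> x \<le> 2 * (w \<bullet> x)" by (simp add: inner_scaleR_right)
    ultimately have wx: "w \<bullet> x = 0" by linarith
    have wa: "w \<bullet> a = 0" using wle[OF aC] wle[OF bC] wx x_def by (simp add: inner_add_right)
    define F where "F = C \<inter> {y. w \<bullet> y = w \<bullet> x}"
    have Ff: "F face_of C" unfolding F_def
      by (rule face_of_Int_supporting_hyperplane_ge[OF cvC]) (use wle in auto)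
    have xF: "x \<in> F" "0 \<in> F" "a \<in> F" unfolding F_def using xC C0 aC wx wa by simp_all
    obtain z where "z \<in> interior C" using inC by blast
    hence "w \<bullet> x < w \<bullet> z" using w(2) ri by simp
    hence "z \<notin> F" by (simp add: F_def)
    hence FC: "F \<noteq> C" using \<open>z \<in> interior C\<close> interior_subset by blast
    have "F \<noteq> {0}" using xF(1) False x_def by (metis singletonD)
    hence ad: "aff_dim F = 1" using sc[OF Ff _ FC] xF(1) by blast
    have "0 \<in> affine hull F" using xF(2) hull_subset[of F affine] by blast
    from aff_dim_eq_dim[OF this] ad have dF: "dim F = 1" by simp
    have ss: "span {x} \<subseteq> span F" using xF by (simp add: span_mono)
    have "dim (span {x}) \<ge> dim (span F)" using dF False x_def by (simp add: dim_span)
    hence "span {x} = span F" using subspace_dim_equal[OF subspace_span subspace_span ss] by simp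
    moreover have "a \<in> span F" using xF(3) by (rule span_base)
    ultimately have "a \<in> span {x}" by simp
    then obtain k where "a = k *\<^sub>R x" unfolding span_singleton by blast
    hence "T a = k *\<^sub>R T x" using linear_cmul[OF lin] by simp
    thus ?thesis using ab x_def by simp
  qed
  have "T ` C \<inter> uminus ` T ` C = {0}"
  proof
    show "{0} \<subseteq> T ` C \<inter> uminus ` T ` C" using C0 linear_0[OF lin] by force
    show "T ` C \<inter> uminus ` T ` C \<subseteq> {0}"
    proof
      fix y assume "y \<in> T ` C \<inter> uminus ` T ` C"
      then obtain a b where a: "a \<in> C" "y = T a" and b: "b \<in> C" "y = - T b" by auto
      hence "T (a + b) = 0" using linear_add[OF lin] by (metis add.commute neg_eq_iff_add_eq_0)
      thus "y \<in> {0}" using key a b by simp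
    qed
  qed
  thus ?thesis using cone unfolding pointed_cone_def by simp
qed

end
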